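(* Consider the exponential-push content-access game described in the context, with $\lambda_{ps}(G)>\lambda_{ps}(B)>0$, $\pi_B=1-\pi_G>0$, and a common threshold $0\le\alpha<N$ of the other users. Let $\beta_1^*(\alpha)$ denote a maximizer of $U(\alpha,\beta)$ over $\beta\in[0,\alpha]$. Then: (i) if $\frac{\pi_G}{\pi_B} < \frac{\lambda_{ps}(G)}{\lambda_{ps}(B)}$, then $\beta^*_1(\alpha)=\alpha$; (ii) if $\frac{\pi_G}{\pi_B} > \frac{\lambda_{ps}(G)}{\lambda_{ps}(B)}$, then $\beta^*_1(\alpha)=0$; (iii) if $\frac{\pi_G}{\pi_B} = \frac{\lambda_{ps}(G)}{\lambda_{ps}(B)}$, then every $\beta\in[0,\alpha]$ is optimal.
   Context: A content has a type $\theta\in\{G,B\}$ (good/bad) and lifetime $\tau>0$; users believe it is good with probability $\pi_G$ and bad with probability $\pi_B=1-\pi_G$. Users use threshold strategies on the viewcount: all users other than a tagged user access the content once the viewcount reaches $\alpha$; the tagged user uses threshold $\beta$. Exponential push dynamics with $N>0$ potential push users: for type $\theta$ with push rate $\lambda_{ps}(\theta)>0$ and pull rate $\lambda_{pu}>0$, let $t_\alpha(\theta)=-\frac{1}{\lambda_{ps}(\theta)}\log(1-\alpha/N)$, and the viewcount is $X(t,\theta)=N(1-e^{-\lambda_{ps}(\theta)t})$ for $0\le t\le t_\alpha(\theta)$ and $X(t,\theta)=N(1-e^{-\lambda_{ps}(\theta)t})+\lambda_{pu}(t-t_\alpha(\theta))$ for $t\ge t_\alpha(\theta)$. For $\beta\ge0$,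 $t_\beta(\theta)=\min\{t\ge0: X(t,\theta)=\beta\}$. The tagged user's utility is $U(\alpha,\beta)=\pi_G(\tau-t_\beta(G))-\pi_B(\tau-t_\beta(B))$. *)

theory Defs
  imports Complex_Main
begin

datatype ctype = G | B

definition t_thr :: "real \<Rightarrow> (ctype \<Rightarrow> real) \<Rightarrow> real \<Rightarrow> ctype \<Rightarrow> real" where
  "t_thr N lps a \<theta> = - (1 / lps \<theta>) * ln (1 - a / N)"

definition viewcount :: "real \<Rightarrow> (ctype \<Rightarrow> real) \<Rightarrow> real \<Rightarrow> real \<Rightarrow> ctype \<Rightarrow> real \<Rightarrow> real" where
  "viewcount N lps lpu \<alpha> \<theta> t =
     (if t \<le> t_thr N lps \<alpha> \<theta> then N * (1 - exp (- lps \<theta> * t))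
      else N * (1 - exp (- lps \<theta> * t)) + lpu * (t - t_thr N lps \<alpha> \<theta>))"

definition t_beta :: "real \<Rightarrow> (ctype \<Rightarrow> real) \<Rightarrow> real \<Rightarrow> real \<Rightarrow> real \<Rightarrow> ctype \<Rightarrow> real" where
  "t_beta N lps lpu \<alpha> \<beta> \<theta> = Inf {t. 0 \<le> t \<and> viewcount N lps lpu \<alpha> \<theta> t = \<beta>}"

definition utility :: "real \<Rightarrow> (ctype \<Rightarrow> real) \<Rightarrow> real \<Rightarrow> real \<Rightarrow> real \<Rightarrow> real \<Rightarrow> real \<Rightarrow> real" where
  "utility N lps lpu \<tau> \<pi>G \<alpha> \<beta> =
     \<pi>G * (\<tau> - t_beta N lps lpu \<alpha> \<beta> G) - (1 - \<pi>G) * (\<tau> - t_beta N lps lpu \<alpha> \<beta> B)"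

definition is_opt :: "real \<Rightarrow> (ctype \<Rightarrow> real) \<Rightarrow> real \<Rightarrow> real \<Rightarrow> real \<Rightarrow> real \<Rightarrow> real \<Rightarrow> bool" where
  "is_opt N lps lpu \<tau> \<pi>G \<alpha> \<beta> \<longleftrightarrow>
     \<beta> \<in> {0..\<alpha>} \<and> (\<forall>b\<in>{0..\<alpha>}. utility N lps lpu \<tau> \<pi>G \<alpha> b \<le> utility N lps lpu \<tau> \<pi>G \<alpha> \<beta>)"

end

theory Submission
  imports Defs
begin

lemma tb:
  fixes N lpu \<alpha> \<beta> :: real and lps :: "ctype \<Rightarrow> real"
  assumes N: "N > 0" and lpu: "lpu > 0" and l: "lps \<theta> > 0"
    and b0: "0 \<le> \<beta>" and ba: "\<beta> \<le> \<alpha>" and aN: "\<alpha> < N"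
  shows "t_beta N lps lpu \<alpha> \<beta> \<theta> = - ln (1 - \<beta> / N) / lps \<theta>"
proof -
  define t0 where "t0 = - ln (1 - \<beta> / N) / lps \<theta>"
  define ta where "ta = t_thr N lps \<alpha> \<theta>"
  have ta: "ta = - ln (1 - \<alpha> / N) / lps \<theta>" unfolding ta_def t_thr_def by simp
  have pa: "1 - \<alpha>/N > 0" using aN N by (simp add: field_simps)
  have pb: "1 - \<beta>/N > 0" using ba aN N by (simp add: field_simps)
  have ab: "1 - \<alpha>/N \<le> 1 - \<beta>/N" using ba N by (simp add: divide_right_mono)
  have b1: "1 - \<beta>/N \<le> 1" using b0 N by simp
  have expa: "exp (- lps \<theta> * ta) = 1 - \<alpha>/N" using pa l unfolding ta by simp
  have expb: "exp (- lps \<theta> * t0) = 1 - \<beta>/N" using pb l unfolding t0_def by simp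
  have "ln (1 - \<beta>/N) \<le> 0" using pb b1 by simp
  hence t0pos: "0 \<le> t0" unfolding t0_def using l
    by (simp add: divide_nonpos_pos)
  have t0ta: "t0 \<le> ta" unfolding t0_def ta using l pa pb ab
    by (simp add: divide_right_mono)
  have X0: "viewcount N lps lpu \<alpha> \<theta> t0 = \<beta>"
    unfolding viewcount_def using t0ta expb N by (simp add: ta_def field_simps)
  have S: "{t. 0 \<le> t \<and> viewcount N lps lpu \<alpha> \<theta> t = \<beta>} = {t0}"
  proof (rule set_eqI, rule iffI)
    fix t assume "t \<in> {t. 0 \<le> t \<and> viewcount N lps lpu \<alpha> \<theta> t = \<beta>}"
    hence t0: "0 \<le> t" and Xt: "viewcount N lps lpu \<alpha> \<theta> t = \<beta>" by auto
    show "t \<in> {t0}"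
    proof (cases "t \<le> ta")
      case True
      hence "N * (1 - exp (- lps \<theta> * t)) = \<beta>" using Xt unfolding viewcount_def ta_def by simp
      hence "exp (- lps \<theta> * t) = 1 - \<beta>/N" using N by (simp add: field_simps)
      hence "- lps \<theta> * t = ln (1 - \<beta>/N)" by (metis ln_exp)
      hence "t = t0" unfolding t0_def using l by (simp add: field_simps)
      thus ?thesis by simp
    next
      case False
      have "exp (- lps \<theta> * t) < exp (- lps \<theta> * ta)" using False l by simp
      hence "N * exp (- lps \<theta> * t) < N * exp (- lps \<theta> * ta)" using N by (rule mult_strict_left_mono)
      moreover have "N * exp (- lps \<theta> * ta) = N - \<alpha>" using expa N by (simp add: field_simps)
      ultimately have "N * (1 - exp (- lps \<theta> * t)) > \<alpha>" by (simp add: right_diff_distrib)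
      moreover have "lpu * (t - ta) > 0" using False lpu by simp
      ultimately have "viewcount N lps lpu \<alpha> \<theta> t > \<alpha>"
        using False unfolding viewcount_def ta_def by simp
      thus ?thesis using Xt ba by simp
    qed
  next
    fix t assume "t \<in> {t0}"
    thus "t \<in> {t. 0 \<le> t \<and> viewcount N lps lpu \<alpha> \<theta> t = \<beta>}" using t0pos X0 by simp
  qed
  show ?thesis unfolding t_beta_def S t0_def by simp
qed

lemma ut:
  fixes N lpu \<tau> \<pi>G \<alpha> \<beta> :: real and lps :: "ctype \<Rightarrow> real"
  assumes "N > 0" and "lpu > 0" and "lps G > 0" and "lps B > 0"
    and "0 \<le> \<beta>" and "\<beta> \<le> \<alpha>" and "\<alpha> < N"
  shows "utility N lps lpu \<tau> \<pi>G \<alpha> \<beta> = (2*\<pi>G - 1) * \<tau>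
     + (- ln (1 - \<beta> / N)) * ((1 - \<pi>G) * lps G - \<pi>G * lps B) / (lps G * lps B)"
  unfolding utility_def tb[of N lpu lps G, OF assms(1,2,3,5,6,7)] tb[of N lpu lps B, OF assms(1,2,4,5,6,7)] using assms(3,4)
  by (simp add: field_simps)

lemma lnmono:
  fixes N b1 b2 :: real
  assumes "N > 0" "b1 < b2" "b2 < N"
  shows "- ln (1 - b1 / N) < - ln (1 - b2 / N)"
proof -
  have "1 - b2/N > 0" using assms by (simp add: field_simps)
  moreover have "1 - b2/N < 1 - b1/N" using assms by (simp add: divide_strict_right_mono)
  ultimately show ?thesis by simp
qed

theorem lemma2:
  fixes N lpu \<tau> \<pi>G \<alpha> :: real and lps :: "ctype \<Rightarrow> real"
  assumes "N > 0" and "lpu > 0" and "\<tau> > 0"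
    and "lps G > lps B" and "lps B > 0"
    and "0 \<le> \<pi>G" and "1 - \<pi>G > 0"
    and "0 \<le> \<alpha>" and "\<alpha> < N"
  shows "(\<pi>G / (1 - \<pi>G) < lps G / lps B \<longrightarrow>
            (\<forall>\<beta>. is_opt N lps lpu \<tau> \<pi>G \<alpha> \<beta> \<longrightarrow> \<beta> = \<alpha>))
       \<and> (\<pi>G / (1 - \<pi>G) > lps G / lps B \<longrightarrow>
            (\<forall>\<beta>. is_opt N lps lpu \<tau> \<pi>G \<alpha> \<beta> \<longrightarrow> \<beta> = 0))
       \<and> (\<pi>G / (1 - \<pi>G) = lps G / lps B \<longrightarrow>
            (\<forall>\<beta>\<in>{0..\<alpha>}. is_opt N lps lpu \<tau> \<pi>G \<alpha> \<beta>))"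
proof -
  have lG: "lps G > 0" using assms by simp
  define c where "c = ((1 - \<pi>G) * lps G - \<pi>G * lps B) / (lps G * lps B)"
  define L where "L = (\<lambda>b::real. - ln (1 - b / N))"
  have U: "\<And>b. b \<in> {0..\<alpha>} \<Longrightarrow> utility N lps lpu \<tau> \<pi>G \<alpha> b = (2*\<pi>G - 1) * \<tau> + L b * c"
    using ut[OF assms(1,2) lG assms(5)] assms(9) unfolding c_def L_def by (simp add: mult.assoc)
  have Lm: "\<And>b1 b2. b1 \<in> {0..\<alpha>} \<Longrightarrow> b2 \<in> {0..\<alpha>} \<Longrightarrow> b1 < b2 \<Longrightarrow> L b1 < L b2"
    unfolding L_def using lnmono assms(1,9) by force
  have den: "lps G * lps B > 0" using lG assms(5) by simp
  have r1: "\<pi>G / (1 - \<pi>G) < lps G / lps B \<longleftrightarrow> c > 0"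
    unfolding c_def using den assms(5,7) by (simp add: divide_simps zero_less_divide_iff mult.commute) 
  have r2: "\<pi>G / (1 - \<pi>G) > lps G / lps B \<longleftrightarrow> c < 0"
    unfolding c_def using den assms(5,7) by (simp add: divide_simps divide_less_0_iff mult.commute)
  have r3: "\<pi>G / (1 - \<pi>G) = lps G / lps B \<longleftrightarrow> c = 0"
    proof -
    have "\<pi>G / (1 - \<pi>G) = lps G / lps B \<longleftrightarrow> \<pi>G * lps B = lps G * (1 - \<pi>G)"
      using assms(5,7) by (simp add: frac_eq_eq)
    moreover have "c = 0 \<longleftrightarrow> (1 - \<pi>G) * lps G - \<pi>G * lps B = 0" unfolding c_def using den by auto
    ultimately show ?thesis by (auto simp: algebra_simps)
  qed
  have a0: "\<alpha> \<in> {0..\<alpha>}" "0 \<in> {0..\<alpha>}" using assms(8) by auto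
  show ?thesis
  proof (intro conjI impI allI ballI)
    fix \<beta> assume h: "\<pi>G / (1 - \<pi>G) < lps G / lps B" and o: "is_opt N lps lpu \<tau> \<pi>G \<alpha> \<beta>"
    have c: "c > 0" using h r1 by simp
    have b: "\<beta> \<in> {0..\<alpha>}" and le: "utility N lps lpu \<tau> \<pi>G \<alpha> \<alpha> \<le> utility N lps lpu \<tau> \<pi>G \<alpha> \<beta>"
      using o a0 unfolding is_opt_def by auto
    show "\<beta> = \<alpha>"
    proof (rule ccontr)
      assume "\<beta> \<noteq> \<alpha>" hence "\<beta> < \<alpha>" using b by simp
      hence "L \<beta> < L \<alpha>" using Lm b a0 by blast
      hence "L \<beta> * c < L \<alpha> * c" using c by simp
      thus False using le U b a0 by simp
    qed
  next
    fix \<beta> assume h: "\<pi>G / (1 - \<pi>G) > lps G / lps B" and o: "is_opt N lps lpu \<tau> \<pi>G \<alpha> \<beta>"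
    have c: "c < 0" using h r2 by simp
    have b: "\<beta> \<in> {0..\<alpha>}" and le: "utility N lps lpu \<tau> \<pi>G \<alpha> 0 \<le> utility N lps lpu \<tau> \<pi>G \<alpha> \<beta>"
      using o a0 unfolding is_opt_def by auto
    show "\<beta> = 0"
    proof (rule ccontr)
      assume "\<beta> \<noteq> 0" hence "0 < \<beta>" using b by simp
      hence "L 0 < L \<beta>" using Lm b a0 by blast
      hence "L \<beta> * c < L 0 * c" using c by (simp add: mult_strict_right_mono_neg)
      thus False using le U b a0 by simp
    qed
  next
    fix \<beta> assume h: "\<pi>G / (1 - \<pi>G) = lps G / lps B" and b: "\<beta> \<in> {0..\<alpha>}"
    have c: "c = 0" using h r3 by simp
    show "is_opt N lps lpu \<tau> \<pi>G \<alpha> \<beta>" unfolding is_opt_def using b U c by simp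
  qed
qed

end
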